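(* Let $k\geqslant 2$ be an integer, and in $B_5$ let $\delta_3=\sigma_2\sigma_1$, $\tilde\delta_3=\sigma_1\sigma_2$, $\Delta_3=\sigma_2\sigma_1\sigma_2$ and \[\beta'_k=(\sigma_1\sigma_3)^{2k-2}(\sigma_3\sigma_4\Delta_3)(\Delta_3\sigma_4)\big[(\delta_3\sigma_4)(\tilde\delta_3\sigma_4)\big]^{k-1}(\delta_3\sigma_4\sigma_3\sigma_4).\] Then $\beta'_k$ is not periodic, i.e. there are no nonzero integers $m,l$ with $(\beta'_k)^m=\Delta^l$.
   Context: $B_5$ is the 5-strand braid group with standard generators $\sigma_1,\dots,\sigma_4$, and $\Delta=(\sigma_1\sigma_2\sigma_3\sigma_4)(\sigma_1\sigma_2\sigma_3)(\sigma_1\sigma_2)\sigma_1$. *)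

theory Defs
  imports Main
begin

text \<open>Braid words: a letter i with 1 <= |i| < n stands for sigma_i if i > 0 and
  for sigma_|i| inverse if i < 0.  The braid group B_n is the set of words modulo
  the congruence braid_eq n generated by free cancellation and the Artin relations.\<close>

inductive braid_eq :: "nat \<Rightarrow> int list \<Rightarrow> int list \<Rightarrow> bool" for n :: nat where
  refl: "braid_eq n w w"
| sym: "braid_eq n u v \<Longrightarrow> braid_eq n v u"
| trans: "braid_eq n u v \<Longrightarrow> braid_eq n v w \<Longrightarrow> braid_eq n u w"
| cong: "braid_eq n u v \<Longrightarrow> braid_eq n (a @ u @ b) (a @ v @ b)"
| cancel: "1 \<le> \<bar>i\<bar> \<Longrightarrow> \<bar>i\<bar> < int n \<Longrightarrow> braid_eq n [i, -i] []"
| comm: "1 \<le> i \<Longrightarrow> 1 \<le> j \<Longrightarrow> i < int n \<Longrightarrow> j < int n \<Longrightarrow> \<bar>i - j\<bar> \<ge> 2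
          \<Longrightarrow> braid_eq n [i, j] [j, i]"
| braid: "1 \<le> i \<Longrightarrow> i + 1 < int n \<Longrightarrow> braid_eq n [i, i + 1, i] [i + 1, i, i + 1]"

definition word_inv :: "int list \<Rightarrow> int list" where
  "word_inv w = rev (map uminus w)"

definition word_pow :: "int list \<Rightarrow> int \<Rightarrow> int list" where
  "word_pow w m = (if m \<ge> 0 then concat (replicate (nat m) w)
                   else concat (replicate (nat (- m)) (word_inv w)))"

definition Delta5 :: "int list" where
  "Delta5 = [1,2,3,4] @ [1,2,3] @ [1,2] @ [1]"

definition delta3 :: "int list" where "delta3 = [2,1]"
definition tdelta3 :: "int list" where "tdelta3 = [1,2]"
definition Delta3 :: "int list" where "Delta3 = [2,1,2]"

definition beta' :: "nat \<Rightarrow> int list" where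
  "beta' k = word_pow [1,3] (2 * int k - 2)
             @ ([3,4] @ Delta3)
             @ (Delta3 @ [4])
             @ word_pow ((delta3 @ [4]) @ (tdelta3 @ [4])) (int k - 1)
             @ (delta3 @ [4,3,4])"

definition periodic5 :: "int list \<Rightarrow> bool" where
  "periodic5 w \<longleftrightarrow> (\<exists>m l :: int. m \<noteq> 0 \<and> l \<noteq> 0 \<and>
      braid_eq 5 (word_pow w m) (word_pow Delta5 l))"

end

theory Submission
  imports Defs
begin

definition sw :: "nat \<Rightarrow> (nat \<Rightarrow> nat) \<Rightarrow> nat \<Rightarrow> nat" where
  "sw a p = p(a := p (Suc a), Suc a := p a)"

definition inc :: "(nat \<Rightarrow> nat) \<Rightarrow> int \<Rightarrow> nat \<Rightarrow> nat \<Rightarrow> int" where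
  "inc p i x y = (if (x = p (nat \<bar>i\<bar>) \<and> y = p (Suc (nat \<bar>i\<bar>))) \<or> (y = p (nat \<bar>i\<bar>) \<and> x = p (Suc (nat \<bar>i\<bar>)))
      then sgn i else 0)"

fun pr :: "(nat \<Rightarrow> nat) \<Rightarrow> int list \<Rightarrow> nat \<Rightarrow> nat" where
  "pr p [] = p"
| "pr p (i # w) = pr (sw (nat \<bar>i\<bar>) p) w"

fun cr :: "(nat \<Rightarrow> nat) \<Rightarrow> int list \<Rightarrow> nat \<Rightarrow> nat \<Rightarrow> int" where
  "cr p [] x y = 0"
| "cr p (i # w) x y = inc p i x y + cr (sw (nat \<bar>i\<bar>) p) w x y"

lemma pr_append: "pr p (u @ v) = pr (pr p u) v"
  by (induction u arbitrary: p) auto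

lemma cr_append: "cr p (u @ v) x y = cr p u x y + cr (pr p u) v x y"
  by (induction u arbitrary: p) auto

definition pv :: "nat \<Rightarrow> nat \<Rightarrow> int \<Rightarrow> nat \<Rightarrow> nat \<Rightarrow> int" where
  "pv u v s x y = (if (x = u \<and> y = v) \<or> (y = u \<and> x = v) then s else 0)"

lemma pv_sym: "pv u v = pv v u"
  by (auto simp: pv_def fun_eq_iff)

lemma inc_pv: "inc p i x y = pv (p (nat \<bar>i\<bar>)) (p (Suc (nat \<bar>i\<bar>))) (sgn i) x y"
  by (simp add: inc_def pv_def)

lemma sw_swap: "a \<noteq> b \<Longrightarrow> a \<noteq> Suc b \<Longrightarrow> Suc a \<noteq> b \<Longrightarrow> sw a (sw b p) = sw b (sw a p)"
  unfolding sw_def by (auto simp: fun_eq_iff)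

lemma inv_pr_cr: "braid_eq n u v \<Longrightarrow> pr p u = pr p v \<and> cr p u x y = cr p v x y"
proof (induction arbitrary: p rule: braid_eq.induct)
  case (cong u v a b)
  then show ?case by (simp add: pr_append cr_append)
next
  case (cancel i)
  then show ?case by (auto simp: sw_def inc_def fun_eq_iff)
next
  case (comm i j)
  define a where "a = nat \<bar>i\<bar>"
  define b where "b = nat \<bar>j\<bar>"
  have ij: "a \<noteq> b" "a \<noteq> Suc b" "Suc a \<noteq> b" using comm.hyps unfolding a_def b_def by auto
  have "pr p [i,j] = pr p [j,i]" using sw_swap[OF ij] by (simp add: a_def[symmetric] b_def[symmetric])
  moreover have "cr p [i,j] x y = cr p [j,i] x y"
    using ij by (simp add: inc_pv a_def[symmetric] b_def[symmetric] sw_def)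
  ultimately show ?case by blast
next
  case (braid i)
  define a where "a = nat \<bar>i\<bar>"
  have e: "nat \<bar>i + 1\<bar> = Suc a" "sgn i = 1" "sgn (i+1) = 1" using braid.hyps unfolding a_def by auto
  have "pr p [i, i+1, i] = pr p [i+1, i, i+1]"
    by (simp add: e a_def[symmetric] sw_def fun_eq_iff)
  moreover have "cr p [i, i+1, i] x y = cr p [i+1, i, i+1] x y"
    by (simp add: e a_def[symmetric] sw_def inc_pv pv_sym)
  ultimately show ?case by blast
qed auto


lemma pr_comp: "pr (p \<circ> q) w = p \<circ> pr q w"
proof (induction w arbitrary: q)
  case (Cons i w)
  have "sw (nat \<bar>i\<bar>) (p \<circ> q) = p \<circ> sw (nat \<bar>i\<bar>) q" by (auto simp: sw_def fun_eq_iff)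
  then show ?case by (simp only: pr.simps Cons.IH)
qed simp

lemma pr_id: "pr p w = p \<circ> pr id w"
  using pr_comp[of p id w] by simp

definition "A2 = [1,3,1,3::int]"
definition "Yw = [3,4,2,1,2,2,1,2,4::int]"
definition "Cw = [2,1,4,1,2,4::int]"
definition "Zw = [2,1,4,3,4::int]"
definition "bw j = concat (replicate j A2) @ Yw @ concat (replicate j Cw) @ Zw"
definition "pi0 = id(1:=4, 2:=1, 3:=5, 4:=3, 5:=(2::nat))"
definition "dl = id(1:=5, 2:=4, 4:=2, 5:=(1::nat))"

lemma A2_pure: "pr p A2 = p"
  by (simp add: A2_def sw_def fun_eq_iff)
lemma C_pure: "pr p Cw = p"
  by (simp add: Cw_def sw_def fun_eq_iff)
lemma YZ: "pr id (Yw @ Zw) = pi0"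
  by (simp add: Yw_def Zw_def pi0_def sw_def fun_eq_iff)
lemma Dl: "pr id Delta5 = dl"
  by (simp add: Delta5_def dl_def sw_def fun_eq_iff)


lemma pure_pow:
  assumes "\<And>p. pr p u = p"
  shows "pr p (concat (replicate j u)) = p \<and> cr p (concat (replicate j u)) x y = int j * cr p u x y"
  by (induction j) (auto simp: pr_append cr_append assms algebra_simps)

lemma pr_bw: "pr p (bw j) = p \<circ> pi0"
  using pure_pow[OF A2_pure] pure_pow[OF C_pure]
  by (simp add: bw_def pr_append) (metis YZ pr_append pr_id)

lemma cr_bw: "cr p (bw j) x y = int j * (cr p A2 x y + cr (pr p Yw) Cw x y) + cr p Yw x y + cr (pr p Yw) Zw x y"
  using pure_pow[OF A2_pure] pure_pow[OF C_pure]
  by (simp add: bw_def pr_append cr_append algebra_simps)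

lemma cr_bw5_12: "cr id (concat (replicate 5 (bw j))) 1 2 = 8 * int j + 10"
  by (simp add: numeral_eq_Suc cr_append pr_append pr_bw cr_bw A2_def Yw_def Cw_def Zw_def pi0_def sw_def inc_pv pv_def)

lemma cr_bw5_13: "cr id (concat (replicate 5 (bw j))) 1 3 = 2 * int j + 4"
  by (simp add: numeral_eq_Suc cr_append pr_append pr_bw cr_bw A2_def Yw_def Cw_def Zw_def pi0_def sw_def inc_pv pv_def)


lemma concat_rep_snoc: "concat (replicate j w) @ w = w @ concat (replicate j w)"
  by (induction j) auto

lemma concat_rep_mult: "concat (replicate (a * b) w) = concat (replicate a (concat (replicate b w)))"
  by (induction a) (auto simp: replicate_add)

lemma Delta_pow: "pr id (concat (replicate L Delta5)) = (if even L then id else dl)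
   \<and> cr id (concat (replicate L Delta5)) 1 2 = int L \<and> cr id (concat (replicate L Delta5)) 1 3 = int L"
proof (induction L)
  case (Suc L)
  have e: "concat (replicate (Suc L) Delta5) = concat (replicate L Delta5) @ Delta5"
    using concat_rep_snoc[of L Delta5] by simp
  have d1: "cr id Delta5 1 2 = 1" "cr id Delta5 1 3 = 1" "cr dl Delta5 1 2 = 1" "cr dl Delta5 1 3 = 1"
    by (simp_all add: Delta5_def dl_def sw_def inc_pv pv_def)
  have d2: "pr dl Delta5 = id" using Dl pr_id[of dl Delta5]
    by (auto simp: dl_def fun_eq_iff)
  have Dl': "pr (\<lambda>a. a) Delta5 = dl" using Dl by (simp add: id_def)
  show ?case using Suc d1 d2 Dl Dl' unfolding e by (auto simp: pr_append cr_append)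
qed simp

lemma word_inv_append: "word_inv (u @ v) = word_inv v @ word_inv u"
  by (simp add: word_inv_def)

lemma word_inv_inv: "word_inv (word_inv w) = w"
  by (simp add: word_inv_def rev_map)

lemma word_inv_rep: "word_inv (concat (replicate j w)) = concat (replicate j (word_inv w))"
  by (induction j) (auto simp: word_inv_append word_inv_def concat_rep_snoc)

lemma cancel_inv: "pr (pr p w) (word_inv w) = p \<and> cr p w x y + cr (pr p w) (word_inv w) x y = 0"
proof (induction w arbitrary: p)
  case (Cons i w)
  have wi: "word_inv (i # w) = word_inv w @ [-i]" by (simp add: word_inv_def)
  have "sw (nat \<bar>i\<bar>) (sw (nat \<bar>i\<bar>) p) = p" by (auto simp: sw_def fun_eq_iff)
  moreover have "inc p i x y + inc (sw (nat \<bar>i\<bar>) p) (-i) x y = 0"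
    by (auto simp: inc_pv pv_def sw_def sgn_if)
  ultimately show ?case using Cons[of "sw (nat \<bar>i\<bar>) p"] unfolding wi
    by (simp add: pr_append cr_append)
qed (simp add: word_inv_def)

definition es :: "int list \<Rightarrow> int" where "es w = sum_list (map sgn w)"

lemma es_inv: "braid_eq n u v \<Longrightarrow> es u = es v"
  by (induction rule: braid_eq.induct) (auto simp: es_def)

lemma es_rep: "es (concat (replicate j w)) = int j * es w"
  by (induction j) (auto simp: es_def algebra_simps)

lemma es_winv: "es (word_inv w) = - es w"
  by (induction w) (auto simp: es_def word_inv_def)

lemma es_pow: "es (word_pow w m) = m * es w"
  by (simp add: word_pow_def es_rep es_winv)

lemma es_bw: "es (bw j) = 10 * int j + 14"
proof -
  have "es (u @ v) = es u + es v" for u v by (simp add: es_def)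
  then show ?thesis by (simp add: bw_def es_rep) (simp add: es_def A2_def Yw_def Cw_def Zw_def)
qed

lemma beta_bw: "k \<ge> 1 \<Longrightarrow> beta' k = bw (k - 1)"
proof -
  assume k: "k \<ge> 1"
  have n: "nat (2 * int k - 2) = (k - 1) * 2" "nat (int k - 1) = k - 1" using k by auto
  show ?thesis
    unfolding beta'_def word_pow_def bw_def n concat_rep_mult
    using k by (simp add: numeral_eq_Suc A2_def Yw_def Cw_def Zw_def Delta3_def delta3_def tdelta3_def)
qed


lemma inv_transfer:
  assumes "\<And>p. pr p (word_inv U) = pr p (word_inv V) \<and> cr p (word_inv U) x y = cr p (word_inv V) x y"
  shows "cr id U x y = cr id V x y"
proof -
  define f1 where "f1 = pr id U"
  define f2 where "f2 = pr id V"
  define g where "g = pr id (word_inv V)"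
  have a1: "pr f1 (word_inv U) = id" "cr id U x y + cr f1 (word_inv U) x y = 0"
    using cancel_inv[of id U x y] unfolding f1_def by auto
  have a2: "pr f2 (word_inv V) = id" "cr id V x y + cr f2 (word_inv V) x y = 0"
    using cancel_inv[of id V x y] unfolding f2_def by auto
  have a3: "pr g V = id" using cancel_inv[of id "word_inv V" x y] unfolding g_def word_inv_inv by auto
  have b1: "f1 \<circ> g = id" using a1(1) assms[of f1] pr_id[of f1 "word_inv V"] unfolding g_def by simp
  have b2: "g \<circ> f2 = id" using a3 pr_id[of g V] unfolding f2_def by simp
  have "f1 = f2" by (metis b1 b2 comp_assoc comp_id id_comp)
  then show ?thesis using a1 a2 assms[of f1] by simp
qed

lemma bw5_pure: "pr p (concat (replicate 5 (bw j))) = p"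
  by (simp add: numeral_eq_Suc pr_append pr_bw fun_eq_iff pi0_def)

lemma key:
  assumes c12: "cr id (concat (replicate M (bw j))) 1 2 = cr id (concat (replicate L Delta5)) 1 2"
    and c13: "cr id (concat (replicate M (bw j))) 1 3 = cr id (concat (replicate L Delta5)) 1 3"
    and e: "int M * (10 * int j + 14) = 10 * int L" and M: "M > 0"
  shows False
proof -
  have "14 * int M = 10 * (int L - int M * int j)" using e by (simp add: algebra_simps)
  then have "int M mod 5 = 0" by presburger
  then have "M mod 5 = 0" by presburger
  then obtain q where q: "M = q * 5" by (metis mult.commute mod_eq_0_iff_dvd dvdE)
  have W: "concat (replicate M (bw j)) = concat (replicate q (concat (replicate 5 (bw j))))"
    unfolding q concat_rep_mult ..
  have "cr id (concat (replicate M (bw j))) 1 2 = int q * (8 * int j + 10)"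
    unfolding W using pure_pow[OF bw5_pure] cr_bw5_12 by simp
  moreover have "cr id (concat (replicate M (bw j))) 1 3 = int q * (2 * int j + 4)"
    unfolding W using pure_pow[OF bw5_pure] cr_bw5_13 by simp
  ultimately have "int q * (8 * int j + 10) = int q * (2 * int j + 4)" using c12 c13 Delta_pow[of L] by simp
  then have "int q * (6 * int j + 6) = 0" by (simp add: algebra_simps)
  then have "q = 0" by simp
  then show False using q M by simp
qed

theorem mainTheorem6:
  fixes k :: nat
  assumes "k \<ge> 2"
  shows "\<not> periodic5 (beta' k)"
proof
  assume "periodic5 (beta' k)"
  then obtain m l :: int where ml: "m \<noteq> 0" "l \<noteq> 0"
    and b: "braid_eq 5 (word_pow (beta' k) m) (word_pow Delta5 l)"
    unfolding periodic5_def by blast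
  define j where "j = k - 1"
  have bk: "beta' k = bw j" using assms beta_bw unfolding j_def by simp
  have esD: "es Delta5 = 10" by (simp add: es_def Delta5_def)
  have e: "m * (10 * int j + 14) = l * 10"
    using es_inv[OF b] es_pow[of "beta' k" m] es_pow[of Delta5 l] es_bw[of j] esD bk by simp
  have inv: "\<And>p x y. pr p (word_pow (bw j) m) = pr p (word_pow Delta5 l) \<and>
      cr p (word_pow (bw j) m) x y = cr p (word_pow Delta5 l) x y"
    using inv_pr_cr[OF b] bk by simp
  show False
  proof (cases "m > 0")
    case True
    then have "l > 0" using e ml
      by (smt (verit) mult_pos_pos mult_neg_pos of_nat_0_le_iff)
    then have wp: "word_pow (bw j) m = concat (replicate (nat m) (bw j))"
        "word_pow Delta5 l = concat (replicate (nat l) Delta5)"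
      using True by (auto simp: word_pow_def)
    show False
    proof (rule key)
      show "cr id (concat (replicate (nat m) (bw j))) 1 2 = cr id (concat (replicate (nat l) Delta5)) 1 2"
        using inv[of id 1 2] wp by simp
      show "cr id (concat (replicate (nat m) (bw j))) 1 3 = cr id (concat (replicate (nat l) Delta5)) 1 3"
        using inv[of id 1 3] wp by simp
      show "int (nat m) * (10 * int j + 14) = 10 * int (nat l)" using e True \<open>l > 0\<close> by simp
      show "nat m > 0" using True by simp
    qed
  next
    case False
    then have m0: "m < 0" using ml by simp
    then have "l < 0" using e ml
      by (smt (verit) mult_pos_pos mult_neg_pos of_nat_0_le_iff)
    then have wp: "word_pow (bw j) m = word_inv (concat (replicate (nat (-m)) (bw j)))"
        "word_pow Delta5 l = word_inv (concat (replicate (nat (-l)) Delta5))"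
      using m0 by (auto simp: word_pow_def word_inv_rep)
    show False
    proof (rule key)
      show "cr id (concat (replicate (nat (-m)) (bw j))) 1 2 = cr id (concat (replicate (nat (-l)) Delta5)) 1 2"
        by (rule inv_transfer) (use inv wp in simp)
      show "cr id (concat (replicate (nat (-m)) (bw j))) 1 3 = cr id (concat (replicate (nat (-l)) Delta5)) 1 3"
        by (rule inv_transfer) (use inv wp in simp)
      show "int (nat (-m)) * (10 * int j + 14) = 10 * int (nat (-l))" using e m0 \<open>l < 0\<close> by simp
      show "nat (-m) > 0" using m0 by simp
    qed
  qed
qed

end
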